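(* Let $n\ge 4$ and let $D_n$ be the tree on vertex set $\{1,\ldots,n\}$ with edges $\{1,3\}$, $\{2,3\}$ and $\{i,i+1\}$ for $3\le i\le n-1$, with adjacency matrix $A$; let $W(D_n)=[e,Ae,\ldots,A^{n-1}e]$ with $e$ the all-ones vector of length $n$, and let $\hat W(D_n)$ be obtained from $W(D_n)$ by deleting the first row and the last column. Then $W(D_n)$ and the $n\times n$ matrix $\begin{pmatrix}0&0\\ \hat W(D_n)&0\end{pmatrix}$ (first row zero, last column zero) have the same Smith normal form. In particular $\operatorname{rank}W(D_n)=\operatorname{rank}\hat W(D_n)$.
   Context: The Smith normal form of an integral square matrix $M$ is the diagonal matrix $\operatorname{diag}[d_1,\ldots,d_n]$ with nonnegative integers $d_i$, $d_i\mid d_{i+1}$, such that $UMV=\operatorname{diag}[d_1,\ldots,d_n]$ for some unimodular integer matrices $U,V$. *)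

theory Defs
  imports "Jordan_Normal_Form.DL_Rank"
begin

definition is_smith_normal_form_of :: "nat \<Rightarrow> int mat \<Rightarrow> int mat \<Rightarrow> bool" where
  "is_smith_normal_form_of n M D \<longleftrightarrow>
     D \<in> carrier_mat n n \<and> diagonal_mat D \<and>
     (\<forall>i<n. D $$ (i,i) \<ge> 0) \<and>
     (\<forall>i. i + 1 < n \<longrightarrow> D $$ (i,i) dvd D $$ (i+1,i+1)) \<and>
     (\<exists>U V. U \<in> carrier_mat n n \<and> V \<in> carrier_mat n n \<and>
            invertible_mat U \<and> invertible_mat V \<and> U * M * V = D)"

definition Dn_edge :: "nat \<Rightarrow> nat \<Rightarrow> nat \<Rightarrow> bool" where
  "Dn_edge n u v \<longleftrightarrow>
     {u, v} = {1, 3} \<or> {u, v} = {2, 3} \<or> (\<exists>i. 3 \<le> i \<and> i \<le> n - 1 \<and> {u, v} = {i, i + 1})"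

text \<open>Adjacency matrix (0-based index k corresponds to vertex k+1).\<close>
definition Dn_adj :: "nat \<Rightarrow> int mat" where
  "Dn_adj n = mat n n (\<lambda>(i,j). if Dn_edge n (i+1) (j+1) then 1 else 0)"

definition walk_mat :: "nat \<Rightarrow> int mat \<Rightarrow> int mat" where
  "walk_mat n A = mat n n (\<lambda>(i,j). ((A ^\<^sub>m j) *\<^sub>v vec n (\<lambda>_. 1)) $ i)"

definition walk_hat :: "nat \<Rightarrow> int mat \<Rightarrow> int mat" where
  "walk_hat n W = mat (n - 1) (n - 1) (\<lambda>(i,j). W $$ (i + 1, j))"

definition pad_hat :: "nat \<Rightarrow> int mat \<Rightarrow> int mat" where
  "pad_hat n H = mat n n (\<lambda>(i,j). if i = 0 \<or> j = n - 1 then 0 else H $$ (i - 1, j))"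

end

theory Submission
  imports Defs
begin

definition eqv :: "nat \<Rightarrow> int mat \<Rightarrow> int mat \<Rightarrow> bool" where
  "eqv n M N \<longleftrightarrow> (\<exists>U V. U \<in> carrier_mat n n \<and> V \<in> carrier_mat n n \<and>
            invertible_mat U \<and> invertible_mat V \<and> U * M * V = N)"

lemma invI:
  assumes "U \<in> carrier_mat n n" "U' \<in> carrier_mat n n" "U * U' = 1\<^sub>m n" "U' * U = 1\<^sub>m n"
  shows "invertible_mat U"
  using assms unfolding invertible_mat_def inverts_mat_def square_mat.simps by auto

lemma invE:
  assumes "invertible_mat (U :: 'a :: semiring_1 mat)" "U \<in> carrier_mat n n"
  obtains U' where "U' \<in> carrier_mat n n" "U * U' = 1\<^sub>m n" "U' * U = 1\<^sub>m n"
proof -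
  from assms obtain B where B: "U * B = 1\<^sub>m n" "B * U = 1\<^sub>m (dim_row B)"
    unfolding invertible_mat_def inverts_mat_def by auto
  have "dim_col B = n" using B(1) by (metis index_mult_mat(3) index_one_mat(3))
  moreover have "dim_row B = n" using B(2) assms(2)
    by (metis carrier_matD(2) index_mult_mat(3) index_one_mat(3))
  ultimately show ?thesis using that[of B] B by auto
qed

lemma assoc_n: "A \<in> carrier_mat n n \<Longrightarrow> B \<in> carrier_mat n n \<Longrightarrow> C \<in> carrier_mat n n \<Longrightarrow>
   A * B * C = A * (B * C)"
  by (rule assoc_mult_mat)

lemma mc: "A \<in> carrier_mat n n \<Longrightarrow> B \<in> carrier_mat n n \<Longrightarrow> A * B \<in> carrier_mat n n"
  by (rule mult_carrier_mat)

lemma inv_mult: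
  assumes "invertible_mat (U :: 'a :: semiring_1 mat)" "invertible_mat V"
    "U \<in> carrier_mat n n" "V \<in> carrier_mat n n"
  shows "invertible_mat (U * V)"
proof -
  obtain U' where U': "U' \<in> carrier_mat n n" "U * U' = 1\<^sub>m n" "U' * U = 1\<^sub>m n"
    using invE[OF assms(1,3)] by blast
  obtain V' where V': "V' \<in> carrier_mat n n" "V * V' = 1\<^sub>m n" "V' * V = 1\<^sub>m n"
    using invE[OF assms(2,4)] by blast
  have c: "U \<in> carrier_mat n n" "V \<in> carrier_mat n n" "U' \<in> carrier_mat n n" "V' \<in> carrier_mat n n"
    using assms U' V' by auto
  have "(U * V) * (V' * U') = U * (V * (V' * U'))"
    by (rule assoc_n[where n=n]) (auto intro!: mc simp: c)
  also have "V * (V' * U') = (V * V') * U'" by (rule assoc_n[where n=n, symmetric]) (auto intro!: mc simp: c)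
  also have "\<dots> = U'" using V' c by simp
  finally have 1: "(U * V) * (V' * U') = 1\<^sub>m n" using U' by simp
  have "(V' * U') * (U * V) = V' * (U' * (U * V))"
    by (rule assoc_n[where n=n]) (auto intro!: mc simp: c)
  also have "U' * (U * V) = (U' * U) * V" by (rule assoc_n[where n=n, symmetric]) (auto intro!: mc simp: c)
  also have "\<dots> = V" using U' c by simp
  finally have 2: "(V' * U') * (U * V) = 1\<^sub>m n" using V' by simp
  show ?thesis by (rule invI[OF _ _ 1 2], insert assms U' V', auto)
qed

lemma inv_transpose:
  assumes "invertible_mat (U :: 'a :: comm_semiring_1 mat)" "U \<in> carrier_mat n n"
  shows "invertible_mat (U\<^sup>T)"
proof -
  obtain U' where U': "U' \<in> carrier_mat n n" "U * U' = 1\<^sub>m n" "U' * U = 1\<^sub>m n"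
    using invE[OF assms] by blast
  have 1: "U\<^sup>T * U'\<^sup>T = 1\<^sub>m n" using U' assms
    by (metis transpose_mult transpose_one)
  have 2: "U'\<^sup>T * U\<^sup>T = 1\<^sub>m n" using U' assms
    by (metis transpose_mult transpose_one)
  show ?thesis by (rule invI[OF _ _ 1 2], insert assms U', auto)
qed

lemma inv_one: "invertible_mat (1\<^sub>m n :: 'a :: semiring_1 mat)"
  by (rule invI[of _ n "1\<^sub>m n"]) auto

lemma eqv_refl: "M \<in> carrier_mat n n \<Longrightarrow> eqv n M M"
  unfolding eqv_def
  by (rule exI[of _ "1\<^sub>m n"], rule exI[of _ "1\<^sub>m n"]) (simp add: inv_one)

lemma eqv_carrier: "eqv n M N \<Longrightarrow> M \<in> carrier_mat n n \<Longrightarrow> N \<in> carrier_mat n n"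
  unfolding eqv_def by auto

lemma eqv_trans:
  assumes "eqv n M N" "eqv n N P" "M \<in> carrier_mat n n"
  shows "eqv n M P"
proof -
  obtain U V where UV: "U \<in> carrier_mat n n" "V \<in> carrier_mat n n" "invertible_mat U"
    "invertible_mat V" "U * M * V = N" using assms(1) unfolding eqv_def by blast
  obtain U2 V2 where UV2: "U2 \<in> carrier_mat n n" "V2 \<in> carrier_mat n n" "invertible_mat U2"
    "invertible_mat V2" "U2 * N * V2 = P" using assms(2) unfolding eqv_def by blast
  have c: "U \<in> carrier_mat n n" "V \<in> carrier_mat n n" "U2 \<in> carrier_mat n n" "V2 \<in> carrier_mat n n"
     "M \<in> carrier_mat n n" using UV UV2 assms by auto
  have "(U2 * U) * M * (V * V2) = U2 * (U * M * V) * V2"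
  proof -
    have "(U2 * U) * M * (V * V2) = (U2 * U) * (M * (V * V2))"
      by (rule assoc_n[where n=n]) (auto intro!: mc simp: c)
    also have "\<dots> = U2 * (U * (M * (V * V2)))" by (rule assoc_n[where n=n]) (auto intro!: mc simp: c)
    also have "M * (V * V2) = (M * V) * V2" by (rule assoc_n[where n=n, symmetric]) (auto intro!: mc simp: c)
    also have "U * ((M * V) * V2) = (U * (M * V)) * V2" by (rule assoc_n[where n=n, symmetric]) (auto intro!: mc simp: c)
    also have "U * (M * V) = U * M * V" by (rule assoc_n[where n=n, symmetric]) (auto intro!: mc simp: c)
    also have "U2 * ((U * M * V) * V2) = U2 * (U * M * V) * V2" by (rule assoc_n[where n=n, symmetric]) (auto intro!: mc simp: c)
    finally show ?thesis .
  qed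
  then have "(U2 * U) * M * (V * V2) = P" using UV UV2 by simp
  moreover have "invertible_mat (U2 * U)" by (rule inv_mult[OF UV2(3) UV(3) UV2(1) UV(1)])
  moreover have "invertible_mat (V * V2)" by (rule inv_mult[OF UV(4) UV2(4) UV(2) UV2(2)])
  ultimately show ?thesis unfolding eqv_def using c
    by (intro exI[of _ "U2 * U"] exI[of _ "V * V2"]) simp
qed

lemma eqv_transpose:
  assumes "eqv n M N" "M \<in> carrier_mat n n"
  shows "eqv n (M\<^sup>T) (N\<^sup>T)"
proof -
  obtain U V where UV: "U \<in> carrier_mat n n" "V \<in> carrier_mat n n" "invertible_mat U"
    "invertible_mat V" "U * M * V = N" using assms(1) unfolding eqv_def by blast
  have "N\<^sup>T = (U * M * V)\<^sup>T" using UV by simp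
  also have "\<dots> = V\<^sup>T * (U * M)\<^sup>T"
    by (rule transpose_mult[of _ n n _ n]) (auto intro!: mc simp: UV assms(2))
  also have "(U * M)\<^sup>T = M\<^sup>T * U\<^sup>T"
    by (rule transpose_mult[of _ n n _ n]) (auto simp: UV assms(2))
  also have "V\<^sup>T * (M\<^sup>T * U\<^sup>T) = V\<^sup>T * M\<^sup>T * U\<^sup>T"
    by (rule assoc_n[where n=n, symmetric]) (auto simp: UV assms(2))
  finally have "N\<^sup>T = V\<^sup>T * M\<^sup>T * U\<^sup>T" .
  moreover have "invertible_mat (V\<^sup>T)" by (rule inv_transpose[OF UV(4) UV(2)])
  moreover have "invertible_mat (U\<^sup>T)" by (rule inv_transpose[OF UV(3) UV(1)])
  ultimately show ?thesis unfolding eqv_def using UV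
    by (intro exI[of _ "V\<^sup>T"] exI[of _ "U\<^sup>T"]) simp
qed

lemma eqv_left:
  assumes "U \<in> carrier_mat n n" "U' \<in> carrier_mat n n" "U * U' = 1\<^sub>m n" "U' * U = 1\<^sub>m n"
    "M \<in> carrier_mat n n"
  shows "eqv n M (U * M)"
  unfolding eqv_def using assms
  using invI[OF assms(1-4)] inv_one[of n]
  by (intro exI[of _ U] exI[of _ "1\<^sub>m n"]) simp

lemma eqv_addrow:
  assumes "M \<in> carrier_mat n n" "r < n" "s < n" "r \<noteq> s"
  shows "eqv n M (addrow a r s M)"
proof -
  have "addrow a r s M = addrow_mat n a r s * M" using addrow_mat[OF assms(1) assms(3)] .
  moreover have "eqv n M (addrow_mat n a r s * M)"
    by (rule eqv_left[OF _ _ addrow_mat_inv[OF assms(2-4)]], insert assms,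
        auto simp: addrow_mat_inv[OF assms(2-4), of "-a", simplified])
  ultimately show ?thesis by simp
qed

lemma eqv_swaprows:
  assumes "M \<in> carrier_mat n n" "r < n" "s < n"
  shows "eqv n M (swaprows r s M)"
proof -
  have "swaprows r s M = swaprows_mat n r s * M" using swaprows_mat[OF assms(1) assms(2,3)] .
  moreover have "eqv n M (swaprows_mat n r s * M)"
    by (rule eqv_left[OF _ _ swaprows_mat_inv[OF assms(2-3)] swaprows_mat_inv[OF assms(2-3)]],
        insert assms, auto)
  ultimately show ?thesis by simp
qed

lemma multrow_neg_inv:
  assumes "r < n"
  shows "multrow_mat n r (-1::int) * multrow_mat n r (-1) = 1\<^sub>m n"
proof -
  have "multrow_mat n r (-1::int) * multrow_mat n r (-1) = multrow r (-1) (multrow_mat n r (-1))"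
    by (rule multrow_mat[symmetric], auto)
  also have "\<dots> = 1\<^sub>m n" by (rule eq_matI, auto)
  finally show ?thesis .
qed

lemma eqv_multrow:
  assumes "M \<in> carrier_mat n n" "r < n"
  shows "eqv n M (multrow r (-1) M)"
proof -
  have "multrow r (-1) M = multrow_mat n r (-1) * M" using multrow_mat[OF assms(1)] .
  moreover have "eqv n M (multrow_mat n r (-1) * M)"
    by (rule eqv_left[OF _ _ multrow_neg_inv[OF assms(2)] multrow_neg_inv[OF assms(2)]],
        insert assms, auto)
  ultimately show ?thesis by simp
qed

definition keeps :: "nat \<Rightarrow> nat \<Rightarrow> int mat \<Rightarrow> int mat \<Rightarrow> bool" where
  "keeps n k M N \<longleftrightarrow> (\<forall>i<n. \<forall>j<n. (i < k \<or> j < k) \<longrightarrow> N $$ (i,j) = M $$ (i,j))"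

definition blk :: "nat \<Rightarrow> nat \<Rightarrow> int mat \<Rightarrow> bool" where
  "blk n k M \<longleftrightarrow> (\<forall>i<n. \<forall>j<n. (i < k \<or> j < k) \<longrightarrow> i \<noteq> j \<longrightarrow> M $$ (i,j) = 0)"

definition gdiv :: "nat \<Rightarrow> nat \<Rightarrow> int \<Rightarrow> int mat \<Rightarrow> bool" where
  "gdiv n k g M \<longleftrightarrow> (\<forall>i<n. \<forall>j<n. k \<le> i \<longrightarrow> k \<le> j \<longrightarrow> g dvd M $$ (i,j))"

definition rstep :: "nat \<Rightarrow> nat \<Rightarrow> int mat \<Rightarrow> int mat \<Rightarrow> bool" where
  "rstep n k M N \<longleftrightarrow> N \<in> carrier_mat n n \<and> eqv n M N \<and> keeps n k M N \<and>
     (\<forall>g. gdiv n k g M \<longrightarrow> gdiv n k g N)"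

lemma rstep_refl: "M \<in> carrier_mat n n \<Longrightarrow> rstep n k M M"
  unfolding rstep_def keeps_def by (simp add: eqv_refl)

lemma rstep_trans:
  assumes "rstep n k M N" "rstep n k N P" "M \<in> carrier_mat n n"
  shows "rstep n k M P"
  using assms eqv_trans unfolding rstep_def keeps_def by metis

lemma gdiv_T: "M \<in> carrier_mat n n \<Longrightarrow> gdiv n k g (M\<^sup>T) = gdiv n k g M"
  unfolding gdiv_def by auto

lemma blk_T: "M \<in> carrier_mat n n \<Longrightarrow> blk n k (M\<^sup>T) = blk n k M"
  unfolding blk_def by auto

lemma keeps_T: "M \<in> carrier_mat n n \<Longrightarrow> N \<in> carrier_mat n n \<Longrightarrow>
   keeps n k (M\<^sup>T) (N\<^sup>T) = keeps n k M N"
  unfolding keeps_def by auto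

lemma rstep_T:
  assumes "rstep n k M N" "M \<in> carrier_mat n n"
  shows "rstep n k (M\<^sup>T) (N\<^sup>T)"
proof -
  have N: "N \<in> carrier_mat n n" using assms unfolding rstep_def by auto
  show ?thesis using assms N eqv_transpose[of n M N] unfolding rstep_def
    by (simp add: gdiv_T keeps_T)
qed

lemma blk_rstep: "blk n k M \<Longrightarrow> rstep n k M N \<Longrightarrow> blk n k N"
  unfolding blk_def rstep_def keeps_def by metis

lemma rstep_carrier: "rstep n k M N \<Longrightarrow> N \<in> carrier_mat n n"
  unfolding rstep_def by auto

lemma rstep_addrow:
  assumes M: "M \<in> carrier_mat n n" and b: "blk n k M" and r: "k \<le> r" "r < n"
    and s: "k \<le> s" "s < n" "r \<noteq> s"
  shows "rstep n k M (addrow a r s M)"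
  unfolding rstep_def
proof (intro conjI allI impI)
  show "addrow a r s M \<in> carrier_mat n n" using M by simp
  show "eqv n M (addrow a r s M)" by (rule eqv_addrow[OF M r(2) s(2) s(3)])
  show "keeps n k M (addrow a r s M)"
    unfolding keeps_def
  proof (intro allI impI)
    fix i j assume ij: "i < n" "j < n" "i < k \<or> j < k"
    show "addrow a r s M $$ (i, j) = M $$ (i, j)"
    proof (cases "i = r")
      case True
      then have "j < k" using ij r by auto
      then have "M $$ (s, j) = 0" using b s ij unfolding blk_def by auto
      then show ?thesis using True ij M by simp
    qed (use ij M in simp)
  qed
  fix g assume g: "gdiv n k g M"
  show "gdiv n k g (addrow a r s M)"
    unfolding gdiv_def
  proof (intro allI impI)
    fix i j assume ij: "i < n" "j < n" "k \<le> i" "k \<le> j"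
    have "g dvd M $$ (i,j)" "g dvd M $$ (s,j)" using g ij s unfolding gdiv_def by auto
    then show "g dvd addrow a r s M $$ (i, j)" using ij M by simp
  qed
qed

lemma rstep_swaprows:
  assumes M: "M \<in> carrier_mat n n" and b: "blk n k M" and r: "k \<le> r" "r < n"
    and s: "k \<le> s" "s < n"
  shows "rstep n k M (swaprows r s M)"
  unfolding rstep_def
proof (intro conjI allI impI)
  show "swaprows r s M \<in> carrier_mat n n" using M by simp
  show "eqv n M (swaprows r s M)" by (rule eqv_swaprows[OF M r(2) s(2)])
  show "keeps n k M (swaprows r s M)"
    unfolding keeps_def
  proof (intro allI impI)
    fix i j assume ij: "i < n" "j < n" "i < k \<or> j < k"
    show "swaprows r s M $$ (i, j) = M $$ (i, j)"
    proof (cases "i = r \<or> i = s")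
      case True
      then have "j < k" using ij r s by auto
      then have "M $$ (s, j) = 0" "M $$ (r, j) = 0" using b s r ij unfolding blk_def by auto
      then show ?thesis using True ij M by auto
    qed (use ij M in auto)
  qed
  fix g assume g: "gdiv n k g M"
  show "gdiv n k g (swaprows r s M)"
    unfolding gdiv_def
  proof (intro allI impI)
    fix i j assume ij: "i < n" "j < n" "k \<le> i" "k \<le> j"
    have "g dvd M $$ (i,j)" "g dvd M $$ (s,j)" "g dvd M $$ (r,j)"
      using g ij s r unfolding gdiv_def by auto
    then show "g dvd swaprows r s M $$ (i, j)" using ij M by simp
  qed
qed

lemma rstep_multrow:
  assumes M: "M \<in> carrier_mat n n" and b: "blk n k M" and r: "k \<le> r" "r < n"
  shows "rstep n k M (multrow r (-1) M)"
  unfolding rstep_def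
proof (intro conjI allI impI)
  show "multrow r (-1) M \<in> carrier_mat n n" using M by simp
  show "eqv n M (multrow r (-1) M)" by (rule eqv_multrow[OF M r(2)])
  show "keeps n k M (multrow r (-1) M)"
    unfolding keeps_def
  proof (intro allI impI)
    fix i j assume ij: "i < n" "j < n" "i < k \<or> j < k"
    show "multrow r (-1) M $$ (i, j) = M $$ (i, j)"
    proof (cases "i = r")
      case True
      then have "j < k" using ij r by auto
      then have "M $$ (r, j) = 0" using b r ij unfolding blk_def by auto
      then show ?thesis using True ij M by auto
    qed (use ij M in auto)
  qed
  fix g assume g: "gdiv n k g M"
  show "gdiv n k g (multrow r (-1) M)"
    unfolding gdiv_def
  proof (intro allI impI)
    fix i j assume ij: "i < n" "j < n" "k \<le> i" "k \<le> j"
    have "g dvd M $$ (i,j)" using g ij unfolding gdiv_def by auto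
    then show "g dvd multrow r (-1) M $$ (i, j)" using ij M by simp
  qed
qed

definition gstep :: "nat \<Rightarrow> nat \<Rightarrow> int mat \<Rightarrow> int mat \<Rightarrow> bool" where
  "gstep n k M N \<longleftrightarrow> rstep n k M N \<and> 0 \<le> N $$ (k,k) \<and>
     (\<forall>j. k < j \<longrightarrow> j < n \<longrightarrow> N $$ (k,j) = 0 \<and> N $$ (j,k) = 0) \<and>
     gdiv n (Suc k) (N $$ (k,k)) N"

lemma gstep_pre: "rstep n k M N1 \<Longrightarrow> gstep n k N1 N \<Longrightarrow> M \<in> carrier_mat n n \<Longrightarrow> gstep n k M N"
  unfolding gstep_def using rstep_trans by blast

lemma gstep_T:
  assumes "gstep n k (M\<^sup>T) N" "M \<in> carrier_mat n n" "k < n"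
  shows "gstep n k M (N\<^sup>T)"
proof -
  have r: "rstep n k (M\<^sup>T) N" and N: "N \<in> carrier_mat n n"
    using assms unfolding gstep_def rstep_def by auto
  have "rstep n k M (N\<^sup>T)" using rstep_T[OF r] assms(2) by simp
  then show ?thesis using assms N unfolding gstep_def by (auto simp: gdiv_T)
qed

lemma caseA:
  assumes M: "M \<in> carrier_mat n n" and b: "blk n k M" and k: "k < n"
    and p: "M $$ (k,k) \<noteq> 0" and i: "k < i" "i < n" and nd: "\<not> M $$ (k,k) dvd M $$ (i,k)"
  shows "\<exists>M2. rstep n k M M2 \<and> M2 $$ (k,k) \<noteq> 0 \<and> \<bar>M2 $$ (k,k)\<bar> < \<bar>M $$ (k,k)\<bar>"
proof -
  define p where "p = M $$ (k,k)"
  define M1 where "M1 = addrow (- (M $$ (i,k) div p)) i k M"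
  define M2 where "M2 = swaprows i k M1"
  have r1: "rstep n k M M1" unfolding M1_def by (rule rstep_addrow[OF M b]) (use i k in auto)
  have M1: "M1 \<in> carrier_mat n n" using r1 rstep_carrier by blast
  have b1: "blk n k M1" using blk_rstep[OF b r1] .
  have r2: "rstep n k M1 M2" unfolding M2_def by (rule rstep_swaprows[OF M1 b1]) (use i k in auto)
  have "M1 $$ (i,k) = - (M $$ (i,k) div p) * p + M $$ (i,k)"
    unfolding M1_def p_def using M i k by simp
  also have "\<dots> = M $$ (i,k) mod p"
    by (metis add.commute diff_conv_add_uminus minus_div_mult_eq_mod mult_minus_left)
  finally have e: "M2 $$ (k,k) = M $$ (i,k) mod p" unfolding M2_def using M1 i k by simp
  have "M2 $$ (k,k) \<noteq> 0" using e nd unfolding p_def by (simp add: dvd_eq_mod_eq_0)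
  moreover have "\<bar>M2 $$ (k,k)\<bar> < \<bar>p\<bar>" using e p abs_mod_less unfolding p_def by metis
  ultimately show ?thesis using rstep_trans[OF r1 r2 M] unfolding p_def by blast
qed

lemma clear_col_aux:
  assumes M: "M \<in> carrier_mat n n" and b: "blk n k M" and k: "k < n"
    and dv: "\<forall>i. k < i \<longrightarrow> i < n \<longrightarrow> M $$ (k,k) dvd M $$ (i,k)"
  shows "\<exists>M1. rstep n k M M1 \<and> (\<forall>i. k < i \<longrightarrow> i < n \<longrightarrow> i \<le> k + t \<longrightarrow> M1 $$ (i,k) = 0)
     \<and> (\<forall>i. k < i \<longrightarrow> i < n \<longrightarrow> M $$ (k,k) dvd M1 $$ (i,k)) \<and> (\<forall>j<n. M1 $$ (k,j) = M $$ (k,j))"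
proof (induction t)
  case 0
  show ?case by (rule exI[of _ M]) (use M dv in \<open>auto simp: rstep_refl\<close>)
next
  case (Suc t)
  then obtain M1 where r1: "rstep n k M M1"
    and z: "\<forall>i. k < i \<longrightarrow> i < n \<longrightarrow> i \<le> k + t \<longrightarrow> M1 $$ (i,k) = 0"
    and d: "\<forall>i. k < i \<longrightarrow> i < n \<longrightarrow> M $$ (k,k) dvd M1 $$ (i,k)"
    and rk: "\<forall>j<n. M1 $$ (k,j) = M $$ (k,j)" by blast
  have M1: "M1 \<in> carrier_mat n n" using r1 rstep_carrier by blast
  have b1: "blk n k M1" using blk_rstep[OF b r1] .
  show ?case
  proof (cases "Suc (k + t) < n")
    case False
    then show ?thesis using r1 z d rk by (intro exI[of _ M1]) auto
  next
    case True
    define i where "i = Suc (k + t)"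
    define M2 where "M2 = addrow (- (M1 $$ (i,k) div M $$ (k,k))) i k M1"
    have r2: "rstep n k M1 M2" unfolding M2_def
      by (rule rstep_addrow[OF M1 b1]) (use True k in \<open>auto simp: i_def\<close>)
    have ik: "i < n" "k < i" using True unfolding i_def by auto
    have "M2 $$ (i,k) = - (M1 $$ (i,k) div M $$ (k,k)) * M1 $$ (k,k) + M1 $$ (i,k)"
      unfolding M2_def using M1 ik k by simp
    also have "\<dots> = 0" using rk k d ik by simp
    finally have z2: "M2 $$ (i,k) = 0" .
    have other: "\<And>i' j. i' < n \<Longrightarrow> j < n \<Longrightarrow> i' \<noteq> i \<Longrightarrow> M2 $$ (i',j) = M1 $$ (i',j)"
      unfolding M2_def using M1 by simp
    show ?thesis
    proof (intro exI[of _ M2] conjI allI impI)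
      show "rstep n k M M2" by (rule rstep_trans[OF r1 r2 M])
      fix i' assume "k < i'" "i' < n"
      then show "M $$ (k, k) dvd M2 $$ (i', k)"
        using other[of i' k] z2 d k by (cases "i' = i") auto
    next
      fix i' assume "k < i'" "i' < n" "i' \<le> k + Suc t"
      then show "M2 $$ (i', k) = 0"
        using other[of i' k] z2 z k unfolding i_def by (cases "i' = Suc (k + t)") auto
    next
      fix j assume "j < n"
      then show "M2 $$ (k, j) = M $$ (k, j)" using other[of k j] rk ik by auto
    qed
  qed
qed

lemma clear_col:
  assumes M: "M \<in> carrier_mat n n" and b: "blk n k M" and k: "k < n"
    and dv: "\<forall>i. k < i \<longrightarrow> i < n \<longrightarrow> M $$ (k,k) dvd M $$ (i,k)"
  shows "\<exists>M1. rstep n k M M1 \<and> (\<forall>i. k < i \<longrightarrow> i < n \<longrightarrow> M1 $$ (i,k) = 0)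
     \<and> (\<forall>j<n. M1 $$ (k,j) = M $$ (k,j))"
  using clear_col_aux[OF assms, of n] by auto

lemma step_nz:
  assumes "M \<in> carrier_mat n n" "blk n k M" "k < n" "M $$ (k,k) \<noteq> 0"
  shows "\<exists>N. gstep n k M N"
  using assms
proof (induction "nat \<bar>M $$ (k,k)\<bar>" arbitrary: M rule: less_induct)
  case less
  define p where "p = M $$ (k,k)"
  note M = less.prems(1) and b = less.prems(2) and k = less.prems(3)
  have p0: "p \<noteq> 0" using less.prems(4) unfolding p_def .
  have IH: "\<exists>N. gstep n k M N" if r: "rstep n k M M2" and nz: "M2 $$ (k,k) \<noteq> 0"
    and lt: "\<bar>M2 $$ (k,k)\<bar> < \<bar>p\<bar>" for M2
  proof -
    have "\<exists>N. gstep n k M2 N"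
      by (rule less.hyps[of M2]) (use r nz lt b k rstep_carrier blk_rstep in \<open>auto simp: p_def\<close>)
    then show ?thesis using gstep_pre[OF r _ M] by blast
  qed
  have MT: "M\<^sup>T \<in> carrier_mat n n" using M by simp
  have bT: "blk n k (M\<^sup>T)" using b M by (simp add: blk_T)
  have pT: "M\<^sup>T $$ (k,k) = p" using M k unfolding p_def by simp
  have IHT: "\<exists>N. gstep n k M N" if r: "rstep n k (M\<^sup>T) M2" and nz: "M2 $$ (k,k) \<noteq> 0"
    and lt: "\<bar>M2 $$ (k,k)\<bar> < \<bar>p\<bar>" for M2
  proof -
    have "\<exists>N. gstep n k M2 N"
      by (rule less.hyps[of M2]) (use r nz lt bT k rstep_carrier blk_rstep in \<open>auto simp: p_def\<close>)
    then obtain N where "gstep n k M2 N" by blast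
    then have "gstep n k (M\<^sup>T) N" using gstep_pre[OF r _ MT] by blast
    then show ?thesis using gstep_T[OF _ M k] by blast
  qed
  show ?case
  proof (cases "\<exists>i. k < i \<and> i < n \<and> \<not> p dvd M $$ (i,k)")
    case True
    then obtain i where i: "k < i" "i < n" "\<not> p dvd M $$ (i,k)" by blast
    from caseA[OF M b k less.prems(4) i(1,2)] i(3) IH show ?thesis unfolding p_def by blast
  next
    case nA: False
    show ?thesis
    proof (cases "\<exists>j. k < j \<and> j < n \<and> \<not> p dvd M $$ (k,j)")
      case True
      then obtain j where j: "k < j" "j < n" "\<not> p dvd M $$ (k,j)" by blast
      have "\<not> M\<^sup>T $$ (k,k) dvd M\<^sup>T $$ (j,k)" using j M k pT by simp
      from caseA[OF MT bT k _ j(1,2) this] pT p0 IHT show ?thesis by auto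
    next
      case nB: False
      obtain M1 where r1: "rstep n k M M1" and z1: "\<forall>i. k < i \<longrightarrow> i < n \<longrightarrow> M1 $$ (i,k) = 0"
        and rk1: "\<forall>j<n. M1 $$ (k,j) = M $$ (k,j)"
        using clear_col[OF M b k] nA unfolding p_def by blast
      have M1: "M1 \<in> carrier_mat n n" using r1 rstep_carrier by blast
      have b1: "blk n k M1" using blk_rstep[OF b r1] .
      have M1T: "M1\<^sup>T \<in> carrier_mat n n" using M1 by simp
      have b1T: "blk n k (M1\<^sup>T)" using b1 M1 by (simp add: blk_T)
      have p1: "M1\<^sup>T $$ (k,k) = p" using rk1 M1 k unfolding p_def by simp
      have dv1: "\<forall>i. k < i \<longrightarrow> i < n \<longrightarrow> M1\<^sup>T $$ (k,k) dvd M1\<^sup>T $$ (i,k)"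
        using nB p1 rk1 M1 k by auto
      obtain M3 where r3: "rstep n k (M1\<^sup>T) M3" and z3: "\<forall>i. k < i \<longrightarrow> i < n \<longrightarrow> M3 $$ (i,k) = 0"
        and rk3: "\<forall>j<n. M3 $$ (k,j) = M1\<^sup>T $$ (k,j)"
        using clear_col[OF M1T b1T k dv1] by blast
      define M4 where "M4 = M3\<^sup>T"
      have M3: "M3 \<in> carrier_mat n n" using r3 rstep_carrier by blast
      have r14: "rstep n k M1 M4" using rstep_T[OF r3 M1T] unfolding M4_def by simp
      have r4: "rstep n k M M4" by (rule rstep_trans[OF r1 r14 M])
      have M4: "M4 \<in> carrier_mat n n" using r4 rstep_carrier by blast
      have b4: "blk n k M4" using blk_rstep[OF b r4] .
      have p4: "M4 $$ (k,k) = p" unfolding M4_def using rk3 p1 M3 M1 k by simp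
      have row4: "M4 $$ (k,j) = 0" if "k < j" "j < n" for j
        unfolding M4_def using z3 that M3 k by simp
      have col4: "M4 $$ (i,k) = 0" if "k < i" "i < n" for i
        unfolding M4_def using rk3 z1 that M3 M1 k by simp
      show ?thesis
      proof (cases "\<exists>i j. k < i \<and> i < n \<and> k < j \<and> j < n \<and> \<not> p dvd M4 $$ (i,j)")
        case True
        then obtain i j where ij: "k < i" "i < n" "k < j" "j < n" "\<not> p dvd M4 $$ (i,j)" by blast
        define M5 where "M5 = addrow 1 k i M4"
        have r45: "rstep n k M4 M5" unfolding M5_def
          by (rule rstep_addrow[OF M4 b4]) (use ij k in auto)
        have r5: "rstep n k M M5" by (rule rstep_trans[OF r4 r45 M])
        have M5: "M5 \<in> carrier_mat n n" using r5 rstep_carrier by blast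
        have b5: "blk n k M5" using blk_rstep[OF b r5] .
        have p5: "M5 $$ (k,k) = p" unfolding M5_def using M4 k ij col4 p4 by simp
        have e5: "M5 $$ (k,j) = M4 $$ (i,j)" unfolding M5_def using M4 k ij row4 by simp
        have M5T: "M5\<^sup>T \<in> carrier_mat n n" using M5 by simp
        have b5T: "blk n k (M5\<^sup>T)" using b5 M5 by (simp add: blk_T)
        have p5T: "M5\<^sup>T $$ (k,k) = p" using p5 M5 k by simp
        have nd: "\<not> M5\<^sup>T $$ (k,k) dvd M5\<^sup>T $$ (j,k)" using p5T e5 ij M5 k by simp
        obtain M6 where r6: "rstep n k (M5\<^sup>T) M6" and nz6: "M6 $$ (k,k) \<noteq> 0"
          and lt6: "\<bar>M6 $$ (k,k)\<bar> < \<bar>p\<bar>"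
          using caseA[OF M5T b5T k _ ij(3,4) nd] p5T p0 by auto
        have "\<exists>N. gstep n k M6 N"
          by (rule less.hyps[of M6])
             (use r6 nz6 lt6 b5T k rstep_carrier blk_rstep in \<open>auto simp: p_def\<close>)
        then obtain N where "gstep n k M6 N" by blast
        then have "gstep n k (M5\<^sup>T) N" using gstep_pre[OF r6 _ M5T] by blast
        then have "gstep n k M5 (N\<^sup>T)" using gstep_T[OF _ M5 k] by blast
        then show ?thesis using gstep_pre[OF r5 _ M] by blast
      next
        case nC: False
        show ?thesis
        proof (cases "p < 0")
          case False
          have "gstep n k M M4" unfolding gstep_def gdiv_def
            using r4 p4 row4 col4 nC False by auto
          then show ?thesis by blast
        next
          case True
          define M7 where "M7 = multrow k (-1) M4"
          have r47: "rstep n k M4 M7" unfolding M7_def by (rule rstep_multrow[OF M4 b4]) (use k in auto)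
          have r7: "rstep n k M M7" by (rule rstep_trans[OF r4 r47 M])
          have e7: "M7 $$ (i,j) = (if i = k then - M4 $$ (i,j) else M4 $$ (i,j))"
            if "i < n" "j < n" for i j unfolding M7_def using M4 that by simp
          have "gstep n k M M7" unfolding gstep_def gdiv_def
          proof (intro conjI allI impI)
            show "rstep n k M M7" by (rule r7)
            show "0 \<le> M7 $$ (k,k)" using e7[of k k] k p4 True by simp
          next
            fix j assume "k < j" "j < n"
            then show "M7 $$ (k, j) = 0" using e7[of k j] row4 k by simp
          next
            fix j assume "k < j" "j < n"
            then show "M7 $$ (j, k) = 0" using e7[of j k] col4 k by simp
          next
            fix i j assume ij: "i < n" "j < n" "Suc k \<le> i" "Suc k \<le> j"
            then have "p dvd M4 $$ (i,j)" using nC by auto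
            then show "M7 $$ (k, k) dvd M7 $$ (i, j)" using e7[of k k] e7[of i j] ij k p4 by simp
          qed
          then show ?thesis by blast
        qed
      qed
    qed
  qed
qed

lemma step_gen:
  assumes M: "M \<in> carrier_mat n n" and b: "blk n k M" and k: "k < n"
  shows "\<exists>N. gstep n k M N"
proof (cases "M $$ (k,k) \<noteq> 0")
  case True
  then show ?thesis using step_nz[OF M b k] by blast
next
  case False
  show ?thesis
  proof (cases "\<exists>i j. k \<le> i \<and> i < n \<and> k \<le> j \<and> j < n \<and> M $$ (i,j) \<noteq> 0")
    case True
    then obtain i j where ij: "k \<le> i" "i < n" "k \<le> j" "j < n" "M $$ (i,j) \<noteq> 0" by blast
    define M1 where "M1 = swaprows i k M"
    have r1: "rstep n k M M1" unfolding M1_def by (rule rstep_swaprows[OF M b]) (use ij k in auto)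
    have M1: "M1 \<in> carrier_mat n n" using r1 rstep_carrier by blast
    have b1: "blk n k M1" using blk_rstep[OF b r1] .
    have e1: "M1 $$ (k,j) = M $$ (i,j)" unfolding M1_def using M ij k by auto
    have M1T: "M1\<^sup>T \<in> carrier_mat n n" using M1 by simp
    have b1T: "blk n k (M1\<^sup>T)" using b1 M1 by (simp add: blk_T)
    define M2 where "M2 = swaprows j k (M1\<^sup>T)"
    have r2: "rstep n k (M1\<^sup>T) M2" unfolding M2_def
      by (rule rstep_swaprows[OF M1T b1T]) (use ij k in auto)
    have M2: "M2 \<in> carrier_mat n n" using r2 rstep_carrier by blast
    have b2: "blk n k M2" using blk_rstep[OF b1T r2] .
    have "M2 $$ (k,k) = M1 $$ (k,j)" unfolding M2_def using M1 ij k by auto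
    then have "M2 $$ (k,k) \<noteq> 0" using e1 ij by simp
    then obtain N where "gstep n k M2 N" using step_nz[OF M2 b2 k] by blast
    then have "gstep n k (M1\<^sup>T) N" using gstep_pre[OF r2 _ M1T] by blast
    then have "gstep n k M1 (N\<^sup>T)" using gstep_T[OF _ M1 k] by blast
    then show ?thesis using gstep_pre[OF r1 _ M] by blast
  next
    case nz: False
    have "gstep n k M M" unfolding gstep_def gdiv_def
      using nz False k by (auto simp: rstep_refl[OF M])
    then show ?thesis by blast
  qed
qed

lemma outer:
  assumes M: "M \<in> carrier_mat n n"
  shows "k \<le> n \<Longrightarrow> \<exists>N. N \<in> carrier_mat n n \<and> eqv n M N \<and> blk n k N \<and> (\<forall>i<k. 0 \<le> N $$ (i,i)) \<and>
     (\<forall>i. Suc i < k \<longrightarrow> N $$ (i,i) dvd N $$ (Suc i, Suc i)) \<and>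
     (0 < k \<longrightarrow> gdiv n k (N $$ (k - 1, k - 1)) N)"
proof (induction k)
  case 0
  show ?case using M by (intro exI[of _ M]) (auto simp: eqv_refl blk_def)
next
  case (Suc k)
  then obtain N where N: "N \<in> carrier_mat n n" and e: "eqv n M N" and b: "blk n k N"
    and nn: "\<forall>i<k. 0 \<le> N $$ (i,i)" and ch: "\<forall>i. Suc i < k \<longrightarrow> N $$ (i,i) dvd N $$ (Suc i, Suc i)"
    and gd: "0 < k \<longrightarrow> gdiv n k (N $$ (k - 1, k - 1)) N" by auto
  have k: "k < n" using Suc by auto
  obtain N' where g: "gstep n k N N'" using step_gen[OF N b k] by blast
  have r: "rstep n k N N'" and nn': "0 \<le> N' $$ (k,k)"
    and z: "\<forall>j. k < j \<longrightarrow> j < n \<longrightarrow> N' $$ (k,j) = 0 \<and> N' $$ (j,k) = 0"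
    and gd': "gdiv n (Suc k) (N' $$ (k,k)) N'" using g unfolding gstep_def by auto
  have N': "N' \<in> carrier_mat n n" and e': "eqv n N N'" and kp: "keeps n k N N'"
    and gp: "\<forall>g. gdiv n k g N \<longrightarrow> gdiv n k g N'" using r unfolding rstep_def by auto
  have kp': "N' $$ (i,j) = N $$ (i,j)" if "i < n" "j < n" "i < k \<or> j < k" for i j
    using kp that unfolding keeps_def by auto
  show ?case
  proof (intro exI[of _ N'] conjI allI impI)
    show "N' \<in> carrier_mat n n" by (rule N')
    show "eqv n M N'" by (rule eqv_trans[OF e e' M])
    show "blk n (Suc k) N'" unfolding blk_def
    proof (intro allI impI)
      fix i j assume ij: "i < n" "j < n" "i < Suc k \<or> j < Suc k" "i \<noteq> j"
      show "N' $$ (i, j) = 0"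
      proof (cases "i < k \<or> j < k")
        case True
        then show ?thesis using kp'[of i j] b ij unfolding blk_def by auto
      next
        case False
        then have "i = k \<and> k < j \<or> j = k \<and> k < i" using ij by auto
        then show ?thesis using z ij by auto
      qed
    qed
  next
    fix i assume "i < Suc k"
    then have "i < k \<or> i = k" by auto
    then show "0 \<le> N' $$ (i, i)" using nn nn' kp'[of i i] k by auto
  next
    fix i assume i: "Suc i < Suc k"
    show "N' $$ (i, i) dvd N' $$ (Suc i, Suc i)"
    proof (cases "Suc i < k")
      case True
      then show ?thesis using ch kp'[of i i] kp'[of "Suc i" "Suc i"] k by auto
    next
      case False
      then have ik: "Suc i = k" using i by auto
      then have "gdiv n k (N $$ (i,i)) N" using gd by auto
      then have "gdiv n k (N $$ (i,i)) N'" using gp by auto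
      then have "N $$ (i,i) dvd N' $$ (k,k)" unfolding gdiv_def using k by auto
      then show ?thesis using kp'[of i i] ik k by auto
    qed
  next
    show "gdiv n (Suc k) (N' $$ (Suc k - 1, Suc k - 1)) N'" using gd' by simp
  qed
qed

lemma snf_exists:
  assumes M: "M \<in> carrier_mat n n"
  shows "\<exists>D. is_smith_normal_form_of n M D"
proof -
  obtain N where N: "N \<in> carrier_mat n n" and e: "eqv n M N" and b: "blk n n N"
    and nn: "\<forall>i<n. 0 \<le> N $$ (i,i)" and ch: "\<forall>i. Suc i < n \<longrightarrow> N $$ (i,i) dvd N $$ (Suc i, Suc i)"
    using outer[OF M, of n] by auto
  have "diagonal_mat N" unfolding diagonal_mat_def using N b unfolding blk_def by auto
  then show ?thesis unfolding is_smith_normal_form_of_def using N e nn ch unfolding eqv_def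
    by (intro exI[of _ N]) auto
qed

definition adj :: "nat \<Rightarrow> nat \<Rightarrow> nat \<Rightarrow> int" where
  "adj n i j = (if Dn_edge n (i+1) (j+1) then 1 else 0)"

lemma edge_iff:
  assumes "4 \<le> n"
  shows "Dn_edge n (Suc i) (Suc j) \<longleftrightarrow> (i \<le> 1 \<and> j = 2) \<or> (i = 2 \<and> j \<le> 1) \<or>
     (2 \<le> i \<and> j = i + 1 \<and> j < n) \<or> (2 \<le> j \<and> i = j + 1 \<and> i < n)"
proof -
  have a: "{Suc i, Suc j} = {1, 3} \<longleftrightarrow> (i = 0 \<and> j = 2) \<or> (i = 2 \<and> j = 0)"
    by (auto simp: doubleton_eq_iff)
  have b: "{Suc i, Suc j} = {2, 3} \<longleftrightarrow> (i = 1 \<and> j = 2) \<or> (i = 2 \<and> j = 1)"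
    by (auto simp: doubleton_eq_iff)
  have c: "(\<exists>m. 3 \<le> m \<and> m \<le> n - 1 \<and> {Suc i, Suc j} = {m, m + 1}) \<longleftrightarrow>
     (2 \<le> i \<and> j = i + 1 \<and> j < n) \<or> (2 \<le> j \<and> i = j + 1 \<and> i < n)"
  proof
    assume "\<exists>m. 3 \<le> m \<and> m \<le> n - 1 \<and> {Suc i, Suc j} = {m, m + 1}"
    then obtain m where m: "3 \<le> m" "m \<le> n - 1" "{Suc i, Suc j} = {m, m + 1}" by blast
    from m(3) have "(Suc i = m \<and> Suc j = m + 1) \<or> (Suc i = m + 1 \<and> Suc j = m)"
      by (simp add: doubleton_eq_iff)
    then show "(2 \<le> i \<and> j = i + 1 \<and> j < n) \<or> (2 \<le> j \<and> i = j + 1 \<and> i < n)"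
      using m(1,2) assms by auto
  next
    assume "(2 \<le> i \<and> j = i + 1 \<and> j < n) \<or> (2 \<le> j \<and> i = j + 1 \<and> i < n)"
    then show "\<exists>m. 3 \<le> m \<and> m \<le> n - 1 \<and> {Suc i, Suc j} = {m, m + 1}"
    proof
      assume h: "2 \<le> i \<and> j = i + 1 \<and> j < n"
      show ?thesis by (rule exI[of _ "Suc i"]) (use h in auto)
    next
      assume h: "2 \<le> j \<and> i = j + 1 \<and> i < n"
      show ?thesis by (rule exI[of _ "Suc j"]) (use h in \<open>auto simp: insert_commute\<close>)
    qed
  qed
  show ?thesis unfolding Dn_edge_def a b c by auto
qed

lemma adj_iff:
  assumes "4 \<le> n"
  shows "adj n i j = (if (i \<le> 1 \<and> j = 2) \<or> (i = 2 \<and> j \<le> 1) \<or>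
     (2 \<le> i \<and> j = i + 1 \<and> j < n) \<or> (2 \<le> j \<and> i = j + 1 \<and> i < n) then 1 else 0)"
  unfolding adj_def using edge_iff[OF assms, of i j] by simp

definition mulA :: "nat \<Rightarrow> (nat \<Rightarrow> int) \<Rightarrow> nat \<Rightarrow> int" where
  "mulA n x i = (\<Sum>j<n. adj n i j * x j)"

definition pw :: "nat \<Rightarrow> nat \<Rightarrow> (nat \<Rightarrow> int) \<Rightarrow> nat \<Rightarrow> int" where
  "pw n k = mulA n ^^ k"

lemma mulA_01:
  assumes "4 \<le> n" "i \<le> 1"
  shows "mulA n x i = x 2"
proof -
  have "mulA n x i = (\<Sum>j<n. if j = 2 then x 2 else 0)"
    unfolding mulA_def by (rule sum.cong) (use assms in \<open>auto simp: adj_iff\<close>)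
  also have "\<dots> = x 2" using assms by simp
  finally show ?thesis .
qed

lemma mulA_2:
  assumes "4 \<le> n"
  shows "mulA n x 2 = x 3 + x 0 + x 1"
proof -
  have "mulA n x 2 = (\<Sum>j<n. (if j = 3 then x 3 else 0) + (if j = 0 then x 0 else 0) + (if j = 1 then x 1 else 0))"
    unfolding mulA_def by (rule sum.cong) (use assms in \<open>auto simp: adj_iff\<close>)
  also have "\<dots> = x 3 + x 0 + x 1" using assms by (simp add: sum.distrib)
  finally show ?thesis .
qed

lemma mulA_ge3:
  assumes "4 \<le> n" "3 \<le> i" "i < n"
  shows "mulA n x i = (if i + 1 < n then x (i+1) else 0) + x (i - 1)"
proof -
  have "mulA n x i = (\<Sum>j<n. (if j = i + 1 then x (i+1) else 0) + (if j = i - 1 then x (i - 1) else 0))"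
    unfolding mulA_def by (rule sum.cong) (use assms in \<open>auto simp: adj_iff\<close>)
  also have "\<dots> = (if i + 1 < n then x (i+1) else 0) + x (i - 1)" using assms by (simp add: sum.distrib)
  finally show ?thesis .
qed

lemma Dn_adj_carrier: "Dn_adj n \<in> carrier_mat n n"
  unfolding Dn_adj_def by simp

lemma Dn_adj_dim[simp]: "dim_row (Dn_adj n) = n" "dim_col (Dn_adj n) = n"
  unfolding Dn_adj_def by simp_all

lemma Dn_adj_index: "i < n \<Longrightarrow> j < n \<Longrightarrow> Dn_adj n $$ (i,j) = adj n i j"
  unfolding Dn_adj_def adj_def by simp

lemma mulA_vec: "Dn_adj n *\<^sub>v vec n x = vec n (mulA n x)"
proof (rule eq_vecI)
  fix i assume "i < dim_vec (vec n (mulA n x))"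
  then have i: "i < n" by simp
  have "(Dn_adj n *\<^sub>v vec n x) $ i = row (Dn_adj n) i \<bullet> vec n x"
    using i by simp
  also have "\<dots> = (\<Sum>j\<in>{0..<n}. Dn_adj n $$ (i,j) * x j)"
    unfolding scalar_prod_def using i Dn_adj_carrier by simp
  also have "\<dots> = mulA n x i" unfolding mulA_def
    by (rule sum.cong) (auto simp: Dn_adj_index i)
  finally show "(Dn_adj n *\<^sub>v vec n x) $ i = vec n (mulA n x) $ i" using i by simp
qed (simp add: Dn_adj_carrier)

lemma pow_vec: "(Dn_adj n ^\<^sub>m k) *\<^sub>v vec n x = vec n (pw n k x)"
proof (induction k arbitrary: x)
  case 0
  show ?case unfolding pw_def using Dn_adj_carrier by simp
next
  case (Suc k)
  have "(Dn_adj n ^\<^sub>m Suc k) *\<^sub>v vec n x = (Dn_adj n ^\<^sub>m k * Dn_adj n) *\<^sub>v vec n x" by simp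
  also have "\<dots> = (Dn_adj n ^\<^sub>m k) *\<^sub>v (Dn_adj n *\<^sub>v vec n x)"
    by (rule assoc_mult_mat_vec[of _ n n _ n]) (auto simp: Dn_adj_carrier)
  also have "\<dots> = vec n (pw n k (mulA n x))" by (simp add: mulA_vec Suc)
  also have "pw n k (mulA n x) = pw n (Suc k) x" unfolding pw_def by (simp only: funpow_Suc_right comp_def)
  finally show ?case .
qed

lemma walk_index: "i < n \<Longrightarrow> j < n \<Longrightarrow> walk_mat n (Dn_adj n) $$ (i,j) = pw n j (\<lambda>_. 1) i"
  unfolding walk_mat_def pow_vec by simp

lemma pw_Suc: "pw n (Suc k) x = mulA n (pw n k x)"
  unfolding pw_def by simp

lemma pw_0: "pw n 0 x = x" unfolding pw_def by simp

lemma pw_add: "pw n a (pw n b x) = pw n (a + b) x"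
  unfolding pw_def by (simp add: funpow_add)

lemma pw_comm: "pw n a (pw n b x) = pw n b (pw n a x)"
  by (simp add: pw_add add.commute)

lemma mulA_resp: "(\<And>i. i < n \<Longrightarrow> x i = y i) \<Longrightarrow> mulA n x = mulA n y"
  unfolding mulA_def by (intro ext sum.cong) auto

lemma pw_Suc': "pw n (Suc k) x = pw n k (mulA n x)"
  unfolding pw_def by (simp only: funpow_Suc_right comp_def)

lemma pw_resp: assumes "\<And>i. i < n \<Longrightarrow> x i = y i" "i < n" shows "pw n k x i = pw n k y i"
proof (cases k)
  case 0
  then show ?thesis using assms by (simp add: pw_0)
next
  case (Suc k')
  have "mulA n x = mulA n y" by (rule mulA_resp) (use assms in auto)
  then show ?thesis using Suc by (simp only: pw_Suc')
qed

lemma mulA_lin: "mulA n (\<lambda>i. \<Sum>m\<in>S. f m * g m i) = (\<lambda>i. \<Sum>m\<in>S. f m * mulA n (g m) i)"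
proof (rule ext)
  fix i
  have "mulA n (\<lambda>i. \<Sum>m\<in>S. f m * g m i) i = (\<Sum>j<n. \<Sum>m\<in>S. adj n i j * (f m * g m j))"
    unfolding mulA_def by (simp only: sum_distrib_left)
  also have "\<dots> = (\<Sum>m\<in>S. \<Sum>j<n. adj n i j * (f m * g m j))" by (rule sum.swap)
  also have "\<dots> = (\<Sum>m\<in>S. f m * mulA n (g m) i)"
    unfolding mulA_def by (simp only: sum_distrib_left mult.left_commute)
  finally show "mulA n (\<lambda>i. \<Sum>m\<in>S. f m * g m i) i = (\<Sum>m\<in>S. f m * mulA n (g m) i)" .
qed

lemma pw_lin: "pw n k (\<lambda>i. \<Sum>m\<in>S. f m * g m i) = (\<lambda>i. \<Sum>m\<in>S. f m * pw n k (g m) i)"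
proof (induction k)
  case 0
  then show ?case by (simp add: pw_0)
next
  case (Suc k)
  then show ?case by (simp add: pw_Suc mulA_lin)
qed

lemma mulA_01_eq: "4 \<le> n \<Longrightarrow> mulA n x 0 = mulA n x 1"
  using mulA_01[of n 0 x] mulA_01[of n 1 x] by simp

definition uvec :: "nat \<Rightarrow> nat \<Rightarrow> int" where
  "uvec n i = (if i = n - 1 then 1 else 0)"

lemma F1:
  assumes n: "4 \<le> n"
  shows "k \<le> n - 3 \<Longrightarrow> (\<forall>i. i < n - 1 - k \<longrightarrow> pw n k (uvec n) i = 0) \<and> pw n k (uvec n) (n - 1 - k) = 1"
proof (induction k)
  case 0
  then show ?case by (auto simp: pw_0 uvec_def)
next
  case (Suc k)
  then have k: "k \<le> n - 4" and IH1: "\<forall>i. i < n - 1 - k \<longrightarrow> pw n k (uvec n) i = 0"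
    and IH2: "pw n k (uvec n) (n - 1 - k) = 1" using n by auto
  let ?x = "pw n k (uvec n)"
  have A: "pw n (Suc k) (uvec n) i = 0" if i: "i < n - 1 - Suc k" for i
  proof -
    have "i \<le> 1 \<or> i = 2 \<or> 3 \<le> i" by auto
    then show ?thesis
    proof (elim disjE)
      assume "i \<le> 1"
      then show ?thesis using mulA_01[OF n, of i ?x] IH1 k n by (simp add: pw_Suc)
    next
      assume "i = 2"
      then show ?thesis using mulA_2[OF n, of ?x] IH1 k n i by (simp add: pw_Suc)
    next
      assume "3 \<le> i"
      then show ?thesis using mulA_ge3[OF n _, of i ?x] IH1 k n i by (simp add: pw_Suc)
    qed
  qed
  have B: "pw n (Suc k) (uvec n) (n - 1 - Suc k) = 1"
  proof -
    let ?i = "n - 1 - Suc k"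
    have "?i = 2 \<or> 3 \<le> ?i" using k n by auto
    then show ?thesis
    proof
      assume h: "?i = 2"
      then have "k = n - 4" using n k by auto
      then show ?thesis using mulA_2[OF n, of ?x] IH1 IH2 n h by (simp add: pw_Suc)
    next
      assume h: "3 \<le> ?i"
      have "?i + 1 = n - 1 - k" "?i - 1 < n - 1 - k" "?i + 1 < n" "?i < n" using h k n by auto
      then show ?thesis using mulA_ge3[OF n h, of ?x] IH1 IH2 by (simp add: pw_Suc)
    qed
  qed
  show ?case using A B by auto
qed

lemma F2:
  assumes n: "4 \<le> n"
  shows "pw n (n - 2) (uvec n) 0 = 1" "pw n (n - 2) (uvec n) 1 = 1"
proof -
  have e: "n - 2 = Suc (n - 3)" using n by auto
  have "pw n (n - 3) (uvec n) 2 = 1" using F1[OF n, of "n - 3"] n by simp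
  then show "pw n (n - 2) (uvec n) 0 = 1" "pw n (n - 2) (uvec n) 1 = 1"
    unfolding e pw_Suc using mulA_01[OF n] by auto
qed

lemma uvec01:
  assumes n: "4 \<le> n"
  shows "pw n s (uvec n) 0 = pw n s (uvec n) 1"
proof (cases s)
  case 0
  then show ?thesis using n by (simp add: pw_0 uvec_def)
next
  case (Suc s')
  then show ?thesis by (simp add: pw_Suc mulA_01_eq[OF n])
qed

lemma Kry:
  assumes n: "4 \<le> n"
  shows "s \<le> n - 1 \<Longrightarrow> \<forall>x. x 0 = x 1 \<longrightarrow> (\<forall>i. 2 \<le> i \<longrightarrow> i < n - s \<longrightarrow> x i = 0) \<longrightarrow>
     (s \<le> n - 2 \<longrightarrow> x 0 = 0) \<longrightarrow> (\<exists>d. \<forall>i<n. x i = (\<Sum>k<s. d k * pw n k (uvec n) i))"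
proof (induction s)
  case 0
  show ?case
  proof (intro allI impI)
    fix x :: "nat \<Rightarrow> int"
    assume h: "x 0 = x 1" "\<forall>i. 2 \<le> i \<longrightarrow> i < n - 0 \<longrightarrow> x i = 0" "0 \<le> n - 2 \<longrightarrow> x 0 = 0"
    have "\<forall>i<n. x i = 0"
    proof (intro allI impI)
      fix i assume "i < n"
      then show "x i = 0" using h by (cases "i \<le> 1") (auto simp: le_Suc_eq)
    qed
    then show "\<exists>d. \<forall>i<n. x i = (\<Sum>k<0. d k * pw n k (uvec n) i)" by simp
  qed
next
  case (Suc s)
  then have s: "s \<le> n - 2" and IH: "\<forall>x. x 0 = x 1 \<longrightarrow> (\<forall>i. 2 \<le> i \<longrightarrow> i < n - s \<longrightarrow> x i = 0) \<longrightarrow>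
     (s \<le> n - 2 \<longrightarrow> x 0 = 0) \<longrightarrow> (\<exists>d. \<forall>i<n. x i = (\<Sum>k<s. d k * pw n k (uvec n) i))" by auto
  show ?case
  proof (intro allI impI)
    fix x :: "nat \<Rightarrow> int"
    assume h1: "x 0 = x 1" and h2: "\<forall>i. 2 \<le> i \<longrightarrow> i < n - Suc s \<longrightarrow> x i = 0"
      and h3: "Suc s \<le> n - 2 \<longrightarrow> x 0 = 0"
    let ?v = "pw n s (uvec n)"
    define a where "a = (if s \<le> n - 3 then x (n - 1 - s) else x 0)"
    define x' where "x' = (\<lambda>i. x i - a * ?v i)"
    have "x' 0 = x' 1" unfolding x'_def using h1 uvec01[OF n, of s] by simp
    moreover have "\<forall>i. 2 \<le> i \<longrightarrow> i < n - s \<longrightarrow> x' i = 0"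
    proof (intro allI impI)
      fix i assume i: "2 \<le> i" "i < n - s"
      then have ss: "s \<le> n - 3" using n by auto
      note F = F1[OF n ss]
      show "x' i = 0"
      proof (cases "i < n - 1 - s")
        case True
        then show ?thesis unfolding x'_def using F h2 i by auto
      next
        case False
        then have "i = n - 1 - s" using i by auto
        then show ?thesis unfolding x'_def a_def using F ss by simp
      qed
    qed
    moreover have "x' 0 = 0"
    proof (cases "s \<le> n - 3")
      case True
      then have "x 0 = 0" using h3 n by auto
      moreover have "?v 0 = 0" using F1[OF n True] n True by auto
      ultimately show ?thesis unfolding x'_def by simp
    next
      case False
      then have "s = n - 2" using s by auto
      then show ?thesis unfolding x'_def a_def using F2[OF n] False by simp
    qed
    ultimately obtain d where d: "\<forall>i<n. x' i = (\<Sum>k<s. d k * pw n k (uvec n) i)"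
      using IH by blast
    define d' where "d' = d(s := a)"
    show "\<exists>d. \<forall>i<n. x i = (\<Sum>k<Suc s. d k * pw n k (uvec n) i)"
    proof (intro exI[of _ d'] allI impI)
      fix i assume i: "i < n"
      have "(\<Sum>k<Suc s. d' k * pw n k (uvec n) i) = (\<Sum>k<s. d k * pw n k (uvec n) i) + a * ?v i"
        unfolding d'_def by simp
      also have "\<dots> = x i"
      proof -
        have "x i - a * ?v i = (\<Sum>k<s. d k * pw n k (uvec n) i)" using d i unfolding x'_def by simp
        then show ?thesis by (metis diff_add_cancel)
      qed
      finally show "x i = (\<Sum>k<Suc s. d' k * pw n k (uvec n) i)" by simp
    qed
  qed
qed

lemma relation:
  assumes n: "4 \<le> n"
  shows "\<exists>c. \<forall>i<n. pw n (n - 1) (\<lambda>_. 1) i = (\<Sum>j<n - 1. c j * pw n j (\<lambda>_. 1) i)"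
proof -
  let ?u = "uvec n"
  have K: "\<forall>x. x 0 = x 1 \<longrightarrow> (\<forall>i. 2 \<le> i \<longrightarrow> i < n - (n - 1) \<longrightarrow> x i = 0) \<longrightarrow>
     (n - 1 \<le> n - 2 \<longrightarrow> x 0 = 0) \<longrightarrow> (\<exists>d. \<forall>i<n. x i = (\<Sum>k<n - 1. d k * pw n k ?u i))"
    using Kry[OF n, of "n - 1"] by simp
  have v1a: "\<And>i. 2 \<le> i \<Longrightarrow> i < n - (n - 1) \<Longrightarrow> pw n (n - 1) ?u i = 0" using n by auto
  have v1b: "\<And>i. 2 \<le> i \<Longrightarrow> i < n - (n - 1) \<Longrightarrow> (\<lambda>_. 1::int) i = 0" using n by auto
  have v2: "\<not> (n - 1 \<le> n - 2)" using n by auto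
  obtain c where c: "\<forall>i<n. pw n (n - 1) ?u i = (\<Sum>m<n - 1. c m * pw n m ?u i)"
    using K[rule_format, of "pw n (n - 1) ?u", OF uvec01[OF n, of "n - 1"] v1a] v2 by blast
  have K1: "(\<lambda>_. 1::int) 0 = (\<lambda>_. 1::int) 1 \<longrightarrow> (\<forall>i. 2 \<le> i \<longrightarrow> i < n - (n - 1) \<longrightarrow> (\<lambda>_. 1::int) i = 0) \<longrightarrow>
     (n - 1 \<le> n - 2 \<longrightarrow> (\<lambda>_. 1::int) 0 = 0) \<longrightarrow> (\<exists>d. \<forall>i<n. (\<lambda>_. 1::int) i = (\<Sum>k<n - 1. d k * pw n k ?u i))"
    by (rule spec[OF K])
  obtain d where d: "\<forall>i<n. (1::int) = (\<Sum>k<n - 1. d k * pw n k ?u i)"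
    using K1 v2 n by auto
  define Y where "Y = (\<lambda>i. \<Sum>k<n - 1. d k * pw n k ?u i)"
  define Z where "Z = (\<lambda>i. \<Sum>m<n - 1. c m * pw n m ?u i)"
  let ?T = "\<lambda>k m i. pw n k (pw n m ?u) i"
  have E: "pw n j (\<lambda>_. 1) i = (\<Sum>k<n - 1. d k * ?T j k i)" if i: "i < n" for i j
  proof -
    have "pw n j (\<lambda>_. 1) i = pw n j Y i" by (rule pw_resp) (use d i in \<open>auto simp: Y_def\<close>)
    also have "\<dots> = (\<Sum>k<n - 1. d k * ?T j k i)" unfolding Y_def pw_lin by simp
    finally show ?thesis .
  qed
  show ?thesis
  proof (intro exI[of _ c] allI impI)
    fix i assume i: "i < n"
    have "pw n (n - 1) (\<lambda>_. 1) i = (\<Sum>k<n - 1. d k * ?T (n - 1) k i)" by (rule E[OF i])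
    also have "\<dots> = (\<Sum>k<n - 1. d k * pw n k Z i)"
    proof (rule sum.cong[OF refl])
      fix k
      have "?T (n - 1) k i = pw n k (pw n (n - 1) ?u) i" by (simp add: pw_comm)
      also have "\<dots> = pw n k Z i" by (rule pw_resp) (use c i in \<open>auto simp: Z_def\<close>)
      finally show "d k * ?T (n - 1) k i = d k * pw n k Z i" by simp
    qed
    also have "\<dots> = (\<Sum>k<n - 1. d k * (\<Sum>m<n - 1. c m * ?T k m i))"
      unfolding Z_def pw_lin by simp
    also have "\<dots> = (\<Sum>k<n - 1. \<Sum>m<n - 1. c m * (d k * ?T m k i))"
      by (simp add: sum_distrib_left pw_comm mult.left_commute)
    also have "\<dots> = (\<Sum>m<n - 1. \<Sum>k<n - 1. c m * (d k * ?T m k i))" by (rule sum.swap)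
    also have "\<dots> = (\<Sum>m<n - 1. c m * pw n m (\<lambda>_. 1) i)"
      by (simp add: E[OF i] sum_distrib_left)
    finally show "pw n (n - 1) (\<lambda>_. 1) i = (\<Sum>j<n - 1. c j * pw n j (\<lambda>_. 1) i)" .
  qed
qed

lemma det1_inv:
  assumes A: "(A :: int mat) \<in> carrier_mat n n" and d: "det A = 1"
  shows "invertible_mat A"
proof -
  have o: "(1::int) \<cdot>\<^sub>m 1\<^sub>m n = 1\<^sub>m n" by (rule eq_matI) auto
  show ?thesis by (rule invI[OF A adj_mat(1)[OF A]]) (use adj_mat(2,3)[OF A] d o in simp_all)
qed

lemma rows01:
  assumes n: "4 \<le> n"
  shows "pw n j (\<lambda>_. 1) 0 = pw n j (\<lambda>_. 1) 1"
  by (cases j) (simp_all add: pw_0 pw_Suc mulA_01_eq[OF n])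

lemma W_equiv:
  assumes n: "4 \<le> n"
  shows "eqv n (walk_mat n (Dn_adj n)) (pad_hat n (walk_hat n (walk_mat n (Dn_adj n))))"
proof -
  define W where "W = walk_mat n (Dn_adj n)"
  define E where "E = (\<lambda>_::nat. 1::int)"
  have Wc: "W \<in> carrier_mat n n" unfolding W_def walk_mat_def by simp
  have Wi: "W $$ (i,j) = pw n j E i" if "i < n" "j < n" for i j
    unfolding W_def E_def using walk_index that by simp
  obtain c where c: "\<forall>i<n. pw n (n - 1) E i = (\<Sum>j<n - 1. c j * pw n j E i)"
    using relation[OF n] unfolding E_def by blast
  define V where "V = mat n n (\<lambda>(i,j). if i = j then 1 else if j = n - 1 then - c i else (0::int))"
  define U where "U = addrow_mat n (-1::int) 0 1"
  have Vc: "V \<in> carrier_mat n n" unfolding V_def by simp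
  have Uc: "U \<in> carrier_mat n n" unfolding U_def by simp
  have ut: "upper_triangular V" unfolding upper_triangular_def V_def by auto
  have "det V = prod_list (diag_mat V)" by (rule det_upper_triangular[OF ut Vc])
  also have "diag_mat V = map (\<lambda>_. 1) [0..<n]" unfolding diag_mat_def V_def by auto
  also have "prod_list (map (\<lambda>_. 1::int) [0..<n]) = 1" by (induction n) auto
  finally have "det V = 1" .
  then have Vi: "invertible_mat V" by (rule det1_inv[OF Vc])
  have "invertible_mat U" unfolding U_def
    by (rule invI[of _ n "addrow_mat n 1 0 1"]) (use addrow_mat_inv[of 0 n 1 "-1"] addrow_mat_inv[of 0 n 1 1] n in auto)
  note Ui = this
  have WV: "(W * V) $$ (i,j) = (if j < n - 1 then W $$ (i,j) else 0)" if ij: "i < n" "j < n" for i j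
  proof -
    have "(W * V) $$ (i,j) = (\<Sum>k\<in>{0..<n}. W $$ (i,k) * V $$ (k,j))"
      using Wc Vc ij by (simp add: scalar_prod_def)
    also have "\<dots> = (if j < n - 1 then W $$ (i,j) else 0)"
    proof (cases "j < n - 1")
      case True
      have "(\<Sum>k\<in>{0..<n}. W $$ (i,k) * V $$ (k,j)) = (\<Sum>k\<in>{0..<n}. if k = j then W $$ (i,j) else 0)"
        by (rule sum.cong) (use True ij in \<open>auto simp: V_def\<close>)
      also have "\<dots> = W $$ (i,j)" using ij by simp
      finally show ?thesis using True by simp
    next
      case False
      then have j: "j = n - 1" using ij by auto
      have nn: "n = Suc (n - 1)" using n by auto
      have "(\<Sum>k\<in>{0..<n}. W $$ (i,k) * V $$ (k,j)) =
          (\<Sum>k\<in>{0..<n - 1}. W $$ (i,k) * V $$ (k,j)) + W $$ (i, n - 1) * V $$ (n - 1, j)"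
        by (subst nn, subst sum.atLeast0_lessThan_Suc) simp
      also have "(\<Sum>k\<in>{0..<n - 1}. W $$ (i,k) * V $$ (k,j)) = (\<Sum>k\<in>{0..<n - 1}. - (c k * pw n k E i))"
        by (rule sum.cong) (use j ij in \<open>auto simp: V_def Wi\<close>)
      also have "W $$ (i, n - 1) * V $$ (n - 1, j) = pw n (n - 1) E i"
        using j ij by (simp add: V_def Wi)
      also have "pw n (n - 1) E i = (\<Sum>k\<in>{0..<n - 1}. c k * pw n k E i)"
        using c ij by (simp add: atLeast0LessThan)
      finally show ?thesis using False by (simp add: sum_negf)
    qed
    finally show ?thesis .
  qed
  have WVc: "W * V \<in> carrier_mat n n" using Wc Vc by simp
  have WVd: "dim_row (W * V) = n" "dim_col (W * V) = n" using WVc by auto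
  have "U * W * V = U * (W * V)" by (rule assoc_mult_mat[OF Uc Wc Vc])
  also have "U * (W * V) = addrow (-1) 0 1 (W * V)" unfolding U_def
    by (rule addrow_mat[symmetric, OF WVc]) (use n in auto)
  also have "\<dots> = pad_hat n (walk_hat n W)"
  proof (rule eq_matI)
    fix i j assume "i < dim_row (pad_hat n (walk_hat n W))" "j < dim_col (pad_hat n (walk_hat n W))"
    then have ij: "i < n" "j < n" unfolding pad_hat_def by auto
    show "addrow (-1) 0 1 (W * V) $$ (i, j) = pad_hat n (walk_hat n W) $$ (i, j)"
    proof (cases "i = 0")
      case True
      then show ?thesis using ij WVd n WV[of 0 j] WV[of 1 j] Wi[of 0 j] Wi[of 1 j] rows01[OF n, of j]
        unfolding pad_hat_def E_def by auto
    next
      case False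
      then show ?thesis using ij WVd n WV[of i j]
        unfolding pad_hat_def walk_hat_def by auto
    qed
  qed (use Wc Vc in \<open>auto simp: pad_hat_def\<close>)
  finally have "U * W * V = pad_hat n (walk_hat n W)" .
  then show ?thesis unfolding eqv_def W_def[symmetric] using Uc Vc Ui Vi by blast
qed

lemma dim_transfer:
  fixes T :: "rat vec \<Rightarrow> rat vec" and A B :: "rat mat"
  assumes A: "A \<in> carrier_mat n na" and B: "B \<in> carrier_mat m nb"
   and img: "T ` LinearCombinations.module.span class_ring (module_vec TYPE(rat) n) (set (cols A))
            = LinearCombinations.module.span class_ring (module_vec TYPE(rat) m) (set (cols B))"
   and inj: "inj_on T (LinearCombinations.module.span class_ring (module_vec TYPE(rat) n) (set (cols A)))"
   and add: "\<And>x y. x \<in> carrier_vec n \<Longrightarrow> y \<in> carrier_vec n \<Longrightarrow> T (x + y) = T x + T y"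
   and smul: "\<And>a x. x \<in> carrier_vec n \<Longrightarrow> T (a \<cdot>\<^sub>v x) = a \<cdot>\<^sub>v T x"
  shows "vec_space.rank n A = vec_space.rank m B"
proof -
  let ?VN = "module_vec TYPE(rat) n" and ?VM = "module_vec TYPE(rat) m"
  let ?SA = "LinearCombinations.module.span class_ring ?VN (set (cols A))"
  let ?SB = "LinearCombinations.module.span class_ring ?VM (set (cols B))"
  have dA: "dim_row A = n" using A by auto
  have dB: "dim_row B = m" using B by auto
  have cA: "set (cols A) \<subseteq> carrier ?VN" using cols_dim[of A] unfolding dA by (simp add: module_vec_simps)
  have cB: "set (cols B) \<subseteq> carrier ?VM" using cols_dim[of B] unfolding dB by (simp add: module_vec_simps)
  have sA: "subspace class_ring ?SA ?VN" by (rule vectorspace.span_is_subspace[OF vec_vs cA])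
  have sB: "subspace class_ring ?SB ?VM" by (rule vectorspace.span_is_subspace[OF vec_vs cB])
  have vA: "vectorspace class_ring (?VN\<lparr>carrier := ?SA\<rparr>)" by (rule vectorspace.subspace_is_vs[OF vec_vs sA])
  have vB: "vectorspace class_ring (?VM\<lparr>carrier := ?SB\<rparr>)" by (rule vectorspace.subspace_is_vs[OF vec_vs sB])
  have SAc: "?SA \<subseteq> carrier_vec n" using sA unfolding subspace_def submodule_def by (auto simp: module_vec_simps)
  have lm: "linear_map class_ring (?VN\<lparr>carrier := ?SA\<rparr>) (?VM\<lparr>carrier := ?SB\<rparr>) T"
    unfolding linear_map_def mod_hom_def mod_hom_axioms_def
  proof (intro conjI)
    show "module class_ring (?VN\<lparr>carrier := ?SA\<rparr>)" using vA unfolding vectorspace_def by blast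
    show "module class_ring (?VM\<lparr>carrier := ?SB\<rparr>)" using vB unfolding vectorspace_def by blast
    show "T \<in> LinearCombinations.module_hom class_ring (?VN\<lparr>carrier := ?SA\<rparr>) (?VM\<lparr>carrier := ?SB\<rparr>)"
      unfolding LinearCombinations.module_hom_def
    proof (intro CollectI conjI allI impI)
      show "T \<in> carrier (?VN\<lparr>carrier := ?SA\<rparr>) \<rightarrow> carrier (?VM\<lparr>carrier := ?SB\<rparr>)"
        using img by auto
    next
      fix x y assume "x \<in> carrier (?VN\<lparr>carrier := ?SA\<rparr>) \<and> y \<in> carrier (?VN\<lparr>carrier := ?SA\<rparr>)"
      then have "x \<in> carrier_vec n" "y \<in> carrier_vec n" using SAc by auto
      then show "T (x \<oplus>\<^bsub>?VN\<lparr>carrier := ?SA\<rparr>\<^esub> y) = T x \<oplus>\<^bsub>?VM\<lparr>carrier := ?SB\<rparr>\<^esub> T y"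
        using add by (simp add: module_vec_simps)
    next
      fix r :: rat and x assume "r \<in> carrier class_ring \<and> x \<in> carrier (?VN\<lparr>carrier := ?SA\<rparr>)"
      then have "x \<in> carrier_vec n" using SAc by auto
      then show "T (r \<odot>\<^bsub>?VN\<lparr>carrier := ?SA\<rparr>\<^esub> x) = r \<odot>\<^bsub>?VM\<lparr>carrier := ?SB\<rparr>\<^esub> T x"
        using smul by (simp add: module_vec_simps)
    qed
  qed (use vA vB in auto)
  have fd: "vectorspace.fin_dim class_ring (?VN\<lparr>carrier := ?SA\<rparr>)"
    by (rule vec_space.fin_dim_span_cols[OF A])
  have "vectorspace.dim class_ring (?VN\<lparr>carrier := ?SA\<rparr>) = vectorspace.dim class_ring (?VM\<lparr>carrier := ?SB\<rparr>)"
    by (rule linear_map.dim_eq[OF lm fd]) (use inj img in simp_all)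
  then show ?thesis by (simp add: vec_space.rank_def)
qed

lemma rank_eq:
  assumes n: "4 \<le> n"
  shows "vec_space.rank n (map_mat (of_int :: int \<Rightarrow> rat) (walk_mat n (Dn_adj n)))
         = vec_space.rank (n - 1) (map_mat (of_int :: int \<Rightarrow> rat) (walk_hat n (walk_mat n (Dn_adj n))))"
proof -
  define W where "W = walk_mat n (Dn_adj n)"
  define E where "E = (\<lambda>_::nat. 1::int)"
  have Wc: "W \<in> carrier_mat n n" unfolding W_def walk_mat_def by simp
  have Wi: "W $$ (i,j) = pw n j E i" if "i < n" "j < n" for i j
    unfolding W_def E_def using walk_index that by simp
  obtain c where c: "\<forall>i<n. pw n (n - 1) E i = (\<Sum>j<n - 1. c j * pw n j E i)"
    using relation[OF n] unfolding E_def by blast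
  have rel: "W $$ (i, n - 1) = (\<Sum>j<n - 1. c j * W $$ (i,j))" if "i < n" for i
    using c that by (simp add: Wi)
  have r01: "W $$ (0, j) = W $$ (1, j)" if "j < n" for j
    using rows01[OF n, of j] that n by (simp add: Wi E_def)
  define WQ where "WQ = map_mat (of_int :: int \<Rightarrow> rat) W"
  define HQ where "HQ = map_mat (of_int :: int \<Rightarrow> rat) (walk_hat n W)"
  have WQc: "WQ \<in> carrier_mat n n" unfolding WQ_def using Wc by simp
  have HQc: "HQ \<in> carrier_mat (n - 1) (n - 1)" unfolding HQ_def walk_hat_def by simp
  define T where "T = (\<lambda>x :: rat vec. vec (n - 1) (\<lambda>i. x $ Suc i))"
  have WQv: "(WQ *\<^sub>v x) $ i = (\<Sum>k\<in>{0..<n}. of_int (W $$ (i,k)) * x $ k)"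
    if "i < n" "x \<in> carrier_vec n" for i x
    using that Wc unfolding WQ_def by (simp add: scalar_prod_def)
  have HQv: "(HQ *\<^sub>v z) $ i = (\<Sum>k\<in>{0..<n - 1}. of_int (W $$ (Suc i,k)) * z $ k)"
    if "i < n - 1" "z \<in> carrier_vec (n - 1)" for i z
    using that Wc unfolding HQ_def walk_hat_def by (simp add: scalar_prod_def)
  define zz where "zz = (\<lambda>x :: rat vec. vec (n - 1) (\<lambda>k. x $ k + of_int (c k) * x $ (n - 1)))"
  have key: "T (WQ *\<^sub>v x) = HQ *\<^sub>v zz x" if x: "x \<in> carrier_vec n" for x
  proof (rule eq_vecI)
    show "dim_vec (T (WQ *\<^sub>v x)) = dim_vec (HQ *\<^sub>v zz x)" unfolding T_def using HQc by simp
    fix i assume "i < dim_vec (HQ *\<^sub>v zz x)"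
    then have i: "i < n - 1" using HQc by simp
    have nn: "n = Suc (n - 1)" using n by auto
    have "T (WQ *\<^sub>v x) $ i = (\<Sum>k\<in>{0..<n}. of_int (W $$ (Suc i,k)) * x $ k)"
      unfolding T_def using i x WQv[of "Suc i" x] by simp
    also have "\<dots> = (\<Sum>k\<in>{0..<n - 1}. of_int (W $$ (Suc i,k)) * x $ k) + of_int (W $$ (Suc i, n - 1)) * x $ (n - 1)"
      by (subst nn, subst sum.atLeast0_lessThan_Suc) simp
    also have "of_int (W $$ (Suc i, n - 1)) * x $ (n - 1) = (\<Sum>k\<in>{0..<n - 1}. of_int (W $$ (Suc i,k)) * (of_int (c k) * x $ (n - 1)))"
    proof -
      have e1: "(of_int (W $$ (Suc i, n - 1)) :: rat) = (\<Sum>k\<in>{0..<n - 1}. of_int (c k) * of_int (W $$ (Suc i,k)))"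
        using rel[of "Suc i"] i by (simp add: atLeast0LessThan)
      have "of_int (W $$ (Suc i, n - 1)) * x $ (n - 1) = (\<Sum>k\<in>{0..<n - 1}. (of_int (c k) * of_int (W $$ (Suc i,k))) * x $ (n - 1))"
        unfolding e1 by (rule sum_distrib_right)
      also have "\<dots> = (\<Sum>k\<in>{0..<n - 1}. of_int (W $$ (Suc i,k)) * (of_int (c k) * x $ (n - 1)))"
        by (rule sum.cong[OF refl]) (simp add: algebra_simps)
      finally show ?thesis .
    qed
    also have "(\<Sum>k\<in>{0..<n - 1}. of_int (W $$ (Suc i,k)) * x $ k) + \<dots> =
        (\<Sum>k\<in>{0..<n - 1}. of_int (W $$ (Suc i,k)) * x $ k + of_int (W $$ (Suc i,k)) * (of_int (c k) * x $ (n - 1)))"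
      by (rule sum.distrib[symmetric])
    also have "\<dots> = (\<Sum>k\<in>{0..<n - 1}. of_int (W $$ (Suc i,k)) * (zz x) $ k)"
      by (rule sum.cong[OF refl]) (simp add: zz_def distrib_left)
    also have "\<dots> = (HQ *\<^sub>v zz x) $ i" using HQv[of i "zz x"] i unfolding zz_def by simp
    finally show "T (WQ *\<^sub>v x) $ i = (HQ *\<^sub>v zz x) $ i" .
  qed
  have spW: "LinearCombinations.module.span class_ring (module_vec TYPE(rat) n) (set (cols WQ))
     = {y\<in>carrier_vec n. \<exists>x\<in>carrier_vec n. WQ *\<^sub>v x = y}"
    using vec_space.col_space_eq[OF WQc] unfolding vec_space.col_space_def using WQc by simp
  have spH: "LinearCombinations.module.span class_ring (module_vec TYPE(rat) (n - 1)) (set (cols HQ))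
     = {y\<in>carrier_vec (n - 1). \<exists>x\<in>carrier_vec (n - 1). HQ *\<^sub>v x = y}"
    using vec_space.col_space_eq[OF HQc] unfolding vec_space.col_space_def using HQc by simp
  have img: "T ` {y\<in>carrier_vec n. \<exists>x\<in>carrier_vec n. WQ *\<^sub>v x = y} =
     {y\<in>carrier_vec (n - 1). \<exists>x\<in>carrier_vec (n - 1). HQ *\<^sub>v x = y}"
  proof (intro equalityI subsetI)
    fix y assume "y \<in> T ` {y\<in>carrier_vec n. \<exists>x\<in>carrier_vec n. WQ *\<^sub>v x = y}"
    then obtain x where x: "x \<in> carrier_vec n" and y: "y = T (WQ *\<^sub>v x)" by auto
    have "zz x \<in> carrier_vec (n - 1)" unfolding zz_def by simp
    then show "y \<in> {y\<in>carrier_vec (n - 1). \<exists>x\<in>carrier_vec (n - 1). HQ *\<^sub>v x = y}"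
      using key[OF x] y HQc by auto
  next
    fix y assume "y \<in> {y\<in>carrier_vec (n - 1). \<exists>x\<in>carrier_vec (n - 1). HQ *\<^sub>v x = y}"
    then obtain z where z: "z \<in> carrier_vec (n - 1)" and y: "y = HQ *\<^sub>v z" by auto
    define x where "x = vec n (\<lambda>k. if k < n - 1 then z $ k else 0)"
    have x: "x \<in> carrier_vec n" unfolding x_def by simp
    have "zz x = z" unfolding zz_def x_def using z n by (intro eq_vecI) auto
    then have "y = T (WQ *\<^sub>v x)" using key[OF x] y by simp
    moreover have "WQ *\<^sub>v x \<in> carrier_vec n" using WQc x by simp
    ultimately show "y \<in> T ` {y\<in>carrier_vec n. \<exists>x\<in>carrier_vec n. WQ *\<^sub>v x = y}" using x by blast
  qed
  have inj: "inj_on T {y\<in>carrier_vec n. \<exists>x\<in>carrier_vec n. WQ *\<^sub>v x = y}"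
  proof (rule inj_onI)
    fix a b assume a: "a \<in> {y\<in>carrier_vec n. \<exists>x\<in>carrier_vec n. WQ *\<^sub>v x = y}"
      and b: "b \<in> {y\<in>carrier_vec n. \<exists>x\<in>carrier_vec n. WQ *\<^sub>v x = y}" and e: "T a = T b"
    have eq01: "v $ 0 = v $ 1" if vin: "v \<in> {y\<in>carrier_vec n. \<exists>x\<in>carrier_vec n. WQ *\<^sub>v x = y}" for v
    proof -
      obtain x where x: "x \<in> carrier_vec n" and v: "WQ *\<^sub>v x = v" using vin by blast
      show ?thesis unfolding v[symmetric] using WQv[OF _ x, of 0] WQv[OF _ x, of 1] n r01 by simp
    qed
    have s: "a $ Suc i = b $ Suc i" if "i < n - 1" for i
      using arg_cong[OF e, of "\<lambda>v. v $ i"] that unfolding T_def by simp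
    have ac: "a \<in> carrier_vec n" using a by blast
    have bc: "b \<in> carrier_vec n" using b by blast
    show "a = b"
    proof (rule eq_vecI)
      show "dim_vec a = dim_vec b" using ac bc by simp
      fix i assume "i < dim_vec b"
      then have i: "i < n" using bc by simp
      show "a $ i = b $ i"
      proof (cases i)
        case 0
        then show ?thesis using eq01[OF a] eq01[OF b] s[of 0] n by simp
      next
        case (Suc i')
        then show ?thesis using s[of i'] i by simp
      qed
    qed
  qed
  have "vec_space.rank n WQ = vec_space.rank (n - 1) HQ"
  proof (rule dim_transfer[OF WQc HQc])
    show "T ` LinearCombinations.module.span class_ring (module_vec TYPE(rat) n) (set (cols WQ)) =
      LinearCombinations.module.span class_ring (module_vec TYPE(rat) (n - 1)) (set (cols HQ))"
      unfolding spW spH by (rule img)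
    show "inj_on T (LinearCombinations.module.span class_ring (module_vec TYPE(rat) n) (set (cols WQ)))"
      unfolding spW by (rule inj)
    show "T (x + y) = T x + T y" if "x \<in> carrier_vec n" "y \<in> carrier_vec n" for x y
      unfolding T_def using that n by (intro eq_vecI) auto
    show "T (a \<cdot>\<^sub>v x) = a \<cdot>\<^sub>v T x" if "x \<in> carrier_vec n" for a x
      unfolding T_def using that n by (intro eq_vecI) auto
  qed
  then show ?thesis unfolding WQ_def HQ_def W_def .
qed

lemma snf_of_eqv:
  assumes "is_smith_normal_form_of n N D" "eqv n M N" "M \<in> carrier_mat n n"
  shows "is_smith_normal_form_of n M D"
proof -
  have "eqv n N D" using assms(1) unfolding is_smith_normal_form_of_def eqv_def by blast
  then have "eqv n M D" using eqv_trans[OF assms(2) _ assms(3)] by blast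
  then show ?thesis using assms(1) unfolding is_smith_normal_form_of_def eqv_def by blast
qed

theorem lemma4p4:
  fixes n :: nat
  assumes "n \<ge> 4"
  shows "(\<exists>D. is_smith_normal_form_of n (walk_mat n (Dn_adj n)) D \<and>
              is_smith_normal_form_of n (pad_hat n (walk_hat n (walk_mat n (Dn_adj n)))) D)
       \<and> vec_space.rank n (map_mat (of_int :: int \<Rightarrow> rat) (walk_mat n (Dn_adj n)))
         = vec_space.rank (n - 1) (map_mat (of_int :: int \<Rightarrow> rat) (walk_hat n (walk_mat n (Dn_adj n))))"
proof
  have Wc: "walk_mat n (Dn_adj n) \<in> carrier_mat n n" unfolding walk_mat_def by simp
  have Pc: "pad_hat n (walk_hat n (walk_mat n (Dn_adj n))) \<in> carrier_mat n n"
    unfolding pad_hat_def by simp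
  obtain D where D: "is_smith_normal_form_of n (pad_hat n (walk_hat n (walk_mat n (Dn_adj n)))) D"
    using snf_exists[OF Pc] by blast
  have "is_smith_normal_form_of n (walk_mat n (Dn_adj n)) D"
    by (rule snf_of_eqv[OF D W_equiv[OF assms] Wc])
  then show "\<exists>D. is_smith_normal_form_of n (walk_mat n (Dn_adj n)) D \<and>
              is_smith_normal_form_of n (pad_hat n (walk_hat n (walk_mat n (Dn_adj n)))) D"
    using D by blast
next
  show "vec_space.rank n (map_mat (of_int :: int \<Rightarrow> rat) (walk_mat n (Dn_adj n)))
         = vec_space.rank (n - 1) (map_mat (of_int :: int \<Rightarrow> rat) (walk_hat n (walk_mat n (Dn_adj n))))"
    by (rule rank_eq[OF assms])
qed

end
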